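(* Let $G=(U,V,E)$ be a path-restricted ordered bipartite graph and let $x$ be a vertex of $G$. Two forward paths starting at $x$ in the same direction (both with increasing orders, or both with decreasing orders) never meet again: if both reach a common vertex $y\neq x$, then their subpaths from $x$ to $y$ coincide.
   Context: An ordered bipartite graph is $G=(U,V,E)$ where $U,V$ are disjoint finite sets, each carrying a strict total order (both written $<$), and $E\subseteq U\times V$. A path is a sequence of edges in which consecutive edges share a vertex. A path visiting the vertices of $U$ in the order $u_1,\dots,u_k$ and those of $V$ in the order $v_1,\dots,v_l$ is a forward path if either $u_1<\dots<u_k$ and $v_1<\dots<v_l$, or $u_1>\dots>u_k$ and $v_1>\dots>v_l$. For $x\le y$ in $U$ write $\langle x,y\rangle=\{u\in U: x\le u\le y\}$, and similarly in $V$. If $u_a<u_b$ are the smallest and largest $U$-vertices and $v_c<v_d$ the smallest and largest $V$-vertices of a forward path $P$, the range of $P$ is $\{\langle u_a,u_b\rangle,\langle v_c,v_d\rangle\}$. A vertex of $P$ is non-terminal if it is adjacent along $P$ to two vertices of $P$. An edge is a back edge to $P$ if either it is $(u_a,v_j)$ with $v_j\in\langle v_c,v_d\rangle$ and $v_j>v'$ for some non-terminal vertex $v'\in V$ of $P$, or it is $(u_i,v_c)$ with $u_i\in\langle u_a,u_b\rangle$ and $u_i>u'$ for some non-terminal vertex $u'\in U$ of $P$. $G$ is a path-restricted ordered bipartite graph (PRBG) if no forward path in $G$ has a back edge in $E$. *)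

theory Defs
  imports Main
begin

text \<open>An ordered bipartite graph: the vertex classes are sets U :: 'u set and
V :: 'v set carrying the strict total orders of the linorder types 'u, 'v;
vertices of G are represented in the disjoint sum 'u + 'v (Inl for U, Inr for V).\<close>

definition vert :: "'u set \<Rightarrow> 'v set \<Rightarrow> ('u + 'v) \<Rightarrow> bool" where
  "vert U V w \<longleftrightarrow> (case w of Inl u \<Rightarrow> u \<in> U | Inr v \<Rightarrow> v \<in> V)"

definition adj :: "('u \<times> 'v) set \<Rightarrow> ('u + 'v) \<Rightarrow> ('u + 'v) \<Rightarrow> bool" where
  "adj E a b \<longleftrightarrow> (\<exists>u v. (u, v) \<in> E \<and> ((a = Inl u \<and> b = Inr v) \<or> (a = Inr v \<and> b = Inl u)))"

definition is_path :: "'u set \<Rightarrow> 'v set \<Rightarrow> ('u \<times> 'v) set \<Rightarrow> ('u + 'v) list \<Rightarrow> bool" where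
  "is_path U V E P \<longleftrightarrow> P \<noteq> [] \<and> (\<forall>w\<in>set P. vert U V w) \<and>
     (\<forall>i. Suc i < length P \<longrightarrow> adj E (P ! i) (P ! Suc i))"

definition useq :: "('u + 'v) list \<Rightarrow> 'u list" where
  "useq P = map projl (filter isl P)"

definition vseq :: "('u + 'v) list \<Rightarrow> 'v list" where
  "vseq P = map projr (filter (\<lambda>w. \<not> isl w) P)"

definition fwd_inc :: "'u::linorder set \<Rightarrow> 'v::linorder set \<Rightarrow> ('u \<times> 'v) set \<Rightarrow> ('u + 'v) list \<Rightarrow> bool" where
  "fwd_inc U V E P \<longleftrightarrow> is_path U V E P \<and> sorted_wrt (<) (useq P) \<and> sorted_wrt (<) (vseq P)"

definition fwd_dec :: "'u::linorder set \<Rightarrow> 'v::linorder set \<Rightarrow> ('u \<times> 'v) set \<Rightarrow> ('u + 'v) list \<Rightarrow> bool" where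
  "fwd_dec U V E P \<longleftrightarrow> is_path U V E P \<and> sorted_wrt (>) (useq P) \<and> sorted_wrt (>) (vseq P)"

definition forward_path :: "'u::linorder set \<Rightarrow> 'v::linorder set \<Rightarrow> ('u \<times> 'v) set \<Rightarrow> ('u + 'v) list \<Rightarrow> bool" where
  "forward_path U V E P \<longleftrightarrow> fwd_inc U V E P \<or> fwd_dec U V E P"

text \<open>A vertex of P is non-terminal if it is adjacent along P to two vertices of P,
i.e. it occurs at an interior position of the vertex list.\<close>
definition non_terminal :: "('u + 'v) list \<Rightarrow> ('u + 'v) \<Rightarrow> bool" where
  "non_terminal P w \<longleftrightarrow> (\<exists>i. 0 < i \<and> Suc i < length P \<and> P ! i = w)"

definition Us :: "('u + 'v) list \<Rightarrow> 'u set" where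
  "Us P = {u. Inl u \<in> set P}"

definition Vs :: "('u + 'v) list \<Rightarrow> 'v set" where
  "Vs P = {v. Inr v \<in> set P}"

definition back_edge :: "'u::linorder set \<Rightarrow> 'v::linorder set \<Rightarrow> ('u + 'v) list \<Rightarrow> ('u \<times> 'v) \<Rightarrow> bool" where
  "back_edge U V P e \<longleftrightarrow>
     (fst e = Min (Us P) \<and> snd e \<in> V \<and> Min (Vs P) \<le> snd e \<and> snd e \<le> Max (Vs P) \<and>
        (\<exists>v'. non_terminal P (Inr v') \<and> v' < snd e))
   \<or> (snd e = Min (Vs P) \<and> fst e \<in> U \<and> Min (Us P) \<le> fst e \<and> fst e \<le> Max (Us P) \<and>
        (\<exists>u'. non_terminal P (Inl u') \<and> u' < fst e))"

definition PRBG :: "'u::linorder set \<Rightarrow> 'v::linorder set \<Rightarrow> ('u \<times> 'v) set \<Rightarrow> bool" where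
  "PRBG U V E \<longleftrightarrow> finite U \<and> finite V \<and> E \<subseteq> U \<times> V \<and>
     (\<forall>P e. forward_path U V E P \<and> e \<in> E \<longrightarrow> \<not> back_edge U V P e)"

end

theory Submission
  imports Defs
begin


lemma useq_simps[simp]:
  "useq [] = []" "useq (Inl u # xs) = u # useq xs" "useq (Inr v # xs) = useq xs"
  "useq (xs @ ys) = useq xs @ useq ys" "useq (rev xs) = rev (useq xs)"
  by (auto simp: useq_def rev_filter rev_map)

lemma vseq_simps[simp]:
  "vseq [] = []" "vseq (Inr v # xs) = v # vseq xs" "vseq (Inl u # xs) = vseq xs"
  "vseq (xs @ ys) = vseq xs @ vseq ys" "vseq (rev xs) = rev (vseq xs)"
  by (auto simp: vseq_def rev_filter rev_map)

lemma set_useq[simp]: "(u \<in> set (useq xs)) = (Inl u \<in> set xs)"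
proof (induction xs)
  case (Cons a xs) thus ?case by (cases a) auto
qed simp
lemma set_vseq[simp]: "(v \<in> set (vseq xs)) = (Inr v \<in> set xs)"
proof (induction xs)
  case (Cons a xs) thus ?case by (cases a) auto
qed simp

lemma finite_Us[simp]: "finite (Us P)"
proof -
  have "Us P = Inl -` set P" by (auto simp: Us_def)
  thus ?thesis by (simp add: finite_vimageI)
qed
lemma finite_Vs[simp]: "finite (Vs P)"
proof -
  have "Vs P = Inr -` set P" by (auto simp: Vs_def)
  thus ?thesis by (simp add: finite_vimageI)
qed

lemma adj_sym: "adj E a b = adj E b a" by (auto simp: adj_def)

lemma is_path_rev: "is_path U V E P \<Longrightarrow> is_path U V E (rev P)"
  unfolding is_path_def
proof (intro conjI allI impI)
  fix i assume h: "P \<noteq> [] \<and> (\<forall>w\<in>set P. vert U V w) \<and> (\<forall>i. Suc i < length P \<longrightarrow> adj E (P ! i) (P ! Suc i))"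
    and i: "Suc i < length (rev P)"
  let ?k = "length P - Suc (Suc i)"
  have "adj E (P ! ?k) (P ! Suc ?k)" using h i by auto
  moreover have "rev P ! i = P ! Suc ?k" "rev P ! Suc i = P ! ?k" using i
    by (auto simp: rev_nth Suc_diff_Suc)
  ultimately show "adj E (rev P ! i) (rev P ! Suc i)" by (simp add: adj_sym)
qed auto

lemma is_path_snoc: "is_path U V E P \<Longrightarrow> vert U V b \<Longrightarrow> adj E (last P) b \<Longrightarrow> is_path U V E (P @ [b])"
  unfolding is_path_def
proof (intro conjI allI impI)
  fix i assume h: "P \<noteq> [] \<and> (\<forall>w\<in>set P. vert U V w) \<and> (\<forall>i. Suc i < length P \<longrightarrow> adj E (P ! i) (P ! Suc i))"
    and a: "adj E (last P) b" and i: "Suc i < length (P @ [b])"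
  show "adj E ((P @ [b]) ! i) ((P @ [b]) ! Suc i)"
  proof (cases "Suc i < length P")
    case True thus ?thesis using h by (simp add: nth_append)
  next
    case False
    hence e: "length P = Suc i" using i by simp
    hence "last P = P ! i" using h by (simp add: last_conv_nth)
    thus ?thesis using a e by (simp add: nth_append)
  qed
qed auto

lemma is_path_take: "is_path U V E P \<Longrightarrow> 0 < n \<Longrightarrow> is_path U V E (take n P)"
  unfolding is_path_def by (auto dest: in_set_takeD)

lemma is_path_tl: "is_path U V E (a # P) \<Longrightarrow> P \<noteq> [] \<Longrightarrow> is_path U V E P"
  unfolding is_path_def by auto

lemma fwd_inc_take: "fwd_inc U V E P \<Longrightarrow> 0 < n \<Longrightarrow> fwd_inc U V E (take n P)"
  unfolding fwd_inc_def using is_path_take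
  by (metis append_take_drop_id sorted_wrt_append useq_simps(4) vseq_simps(4))

lemma fwd_inc_tl: "fwd_inc U V E (a # P) \<Longrightarrow> P \<noteq> [] \<Longrightarrow> fwd_inc U V E P"
  unfolding fwd_inc_def using is_path_tl
  by (cases a) auto

lemma fwd_dec_rev: "fwd_dec U V E P \<Longrightarrow> fwd_inc U V E (rev P)"
  unfolding fwd_inc_def fwd_dec_def using is_path_rev by (auto simp: sorted_wrt_rev)

lemma inc_distinct: "sorted_wrt (<) (useq (xs::('u::linorder + 'v::linorder) list)) \<Longrightarrow> sorted_wrt (<) (vseq xs) \<Longrightarrow> distinct xs"
proof (induction xs)
  case (Cons a xs)
  show ?case
  proof (cases a)
    case (Inl u)
    have "\<forall>y\<in>set (useq xs). u < y" "sorted_wrt (<) (useq xs)" using Cons.prems Inl by auto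
    hence "Inl u \<notin> set xs" using set_useq[of u xs] by (auto simp del: set_useq)
    thus ?thesis using Cons Inl by simp
  next
    case (Inr u)
    have "\<forall>y\<in>set (vseq xs). u < y" "sorted_wrt (<) (vseq xs)" using Cons.prems Inr by auto
    hence "Inr u \<notin> set xs" using set_vseq[of u xs] by (auto simp del: set_vseq)
    thus ?thesis using Cons Inr by simp
  qed
qed simp

lemma fwd_inc_distinct: "fwd_inc U V E P \<Longrightarrow> distinct P"
  unfolding fwd_inc_def using inc_distinct by blast

lemma adj_simps[simp]:
  "adj E (Inl u) (Inr v) = ((u,v) \<in> E)" "adj E (Inr v) (Inl u) = ((u,v) \<in> E)"
  "\<not> adj E (Inl u) (Inl u')" "\<not> adj E (Inr v) (Inr v')"
  by (auto simp: adj_def)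

lemma is_path_adj01: "is_path U V E (a # b # xs) \<Longrightarrow> adj E a b"
  unfolding is_path_def by (metis length_Cons nth_Cons_0 nth_Cons_Suc zero_less_Suc Suc_less_eq)

lemma is_path_vert: "is_path U V E P \<Longrightarrow> w \<in> set P \<Longrightarrow> vert U V w"
  unfolding is_path_def by auto

lemma core_Inl:
  assumes G: "PRBG U V E" and fA: "fwd_inc U V E A" and fB: "fwd_inc U V E B"
    and A: "A = Inl u # Inr va # A'" and B: "B = Inl u # Inr vb # B'"
    and lt: "va < vb" and last: "last A = last B"
  shows False
proof -
  have pA: "is_path U V E A" and pB: "is_path U V E B" using fA fB by (auto simp: fwd_inc_def)
  have sUA: "sorted_wrt (<) (useq A)" and sVA: "sorted_wrt (<) (vseq A)"
    and sUB: "sorted_wrt (<) (useq B)" and sVB: "sorted_wrt (<) (vseq B)"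
    using fA fB by (auto simp: fwd_inc_def)
  have uA: "\<And>u'. Inl u' \<in> set A \<Longrightarrow> u \<le> u'"
    using sUA A by (auto simp del: set_useq simp add: set_useq[symmetric] less_imp_le)
  have uB: "\<And>u'. Inl u' \<in> set B \<Longrightarrow> u \<le> u'"
    using sUB B by (auto simp del: set_useq simp add: set_useq[symmetric] less_imp_le)
  have vA: "\<And>v'. Inr v' \<in> set A \<Longrightarrow> va \<le> v'"
    using sVA A by (auto simp del: set_vseq simp add: set_vseq[symmetric] less_imp_le)
  have vB: "\<And>v'. Inr v' \<in> set B \<Longrightarrow> vb \<le> v'"
    using sVB B by (auto simp del: set_vseq simp add: set_vseq[symmetric] less_imp_le)
  have eB: "(u, vb) \<in> E" using is_path_adj01[OF pB[unfolded B]] by simp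
  have eA: "(u, va) \<in> E" using is_path_adj01[OF pA[unfolded A]] by simp
  have vbV: "vb \<in> V" using is_path_vert[OF pB, of "Inr vb"] B by (simp add: vert_def)
  have vaV: "va \<in> V" using is_path_vert[OF pA, of "Inr va"] A by (simp add: vert_def)
  have noE: "\<not> back_edge U V P e" if "forward_path U V E P" "e \<in> E" for P e
    using G that unfolding PRBG_def by blast
  show False
  proof (cases "last A")
    case (Inr vw)
    have "Inr vw \<in> set B" using last Inr B by (metis last_in_set list.distinct(1))
    hence vbw: "vb \<le> vw" using vB by blast
    have A'ne: "A' \<noteq> []"
    proof
      assume "A' = []" hence "vw = va" using A Inr by simp
      thus False using lt vbw by simp
    qed
    have minU: "Min (Us A) = u"
      by (rule Min_eqI[OF finite_Us]) (auto simp: Us_def A uA[unfolded A])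
    have "Inr vw \<in> set A" using Inr A by (metis last_in_set list.distinct(1))
    hence "vw \<in> Vs A" by (simp add: Vs_def)
    hence maxV: "vb \<le> Max (Vs A)" using vbw Max_ge[OF finite_Vs] order_trans by blast
    have "va \<in> Vs A" using A by (simp add: Vs_def)
    hence minV: "Min (Vs A) \<le> vb" using Min_le[OF finite_Vs] lt by (meson less_imp_le order_trans)
    have nt: "non_terminal A (Inr va)" unfolding non_terminal_def
      using A A'ne by (intro exI[of _ 1]) auto
    have "back_edge U V A (u, vb)" unfolding back_edge_def
      using minU maxV minV nt lt vbV by auto
    moreover have "forward_path U V E A" using fA by (simp add: forward_path_def)
    ultimately show False using noE eB by blast
  next
    case (Inl uw)
    have A'ne: "A' \<noteq> []" using A Inl by auto
    then obtain a2 A'' where A': "A' = a2 # A''" by (cases A') auto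
    have "adj E (Inr va) a2" using is_path_adj01[of U V E "Inr va" a2 A''] pA A A'
      by (metis is_path_tl list.distinct(1))
    then obtain u1 where a2: "a2 = Inl u1" and e1: "(u1, va) \<in> E"
      by (cases a2) auto
    have u1U: "u1 \<in> U" using is_path_vert[OF pA, of "Inl u1"] A A' a2 by (simp add: vert_def)
    have uu1: "u < u1" using sUA A A' a2 by simp
    have "Inl uw \<in> set (Inl u1 # A'')" using Inl A A' a2 by (metis last_ConsR last_in_set list.distinct(1))
    hence u1w: "u1 \<le> uw" using sUA A A' a2
      by (auto simp del: set_useq simp add: set_useq[symmetric] less_imp_le)
    define R where "R = rev B @ [Inr va]"
    have pR: "is_path U V E R" unfolding R_def
      by (rule is_path_snoc[OF is_path_rev[OF pB]]) (auto simp: vert_def vaV B last_rev eA)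
    have "sorted_wrt (>) (useq R)" using sUB by (simp add: R_def sorted_wrt_rev)
    moreover have "sorted_wrt (>) (vseq R)" using sVB vB lt
      by (auto simp: R_def sorted_wrt_rev sorted_wrt_append intro: less_le_trans)
    ultimately have fR: "forward_path U V E R" using pR by (simp add: forward_path_def fwd_dec_def)
    have minV: "Min (Vs R) = va"
      by (rule Min_eqI[OF finite_Vs]) (auto simp: Vs_def R_def dest: vB intro: less_imp_le less_le_trans[OF lt])
    have "u \<in> Us R" using B by (simp add: Us_def R_def)
    hence minU: "Min (Us R) \<le> u1" using Min_le[OF finite_Us] uu1 by (meson less_imp_le order_trans)
    have "Inl uw \<in> set B" using last Inl B by (metis last_in_set list.distinct(1))
    hence "uw \<in> Us R" by (simp add: Us_def R_def)
    hence maxU: "u1 \<le> Max (Us R)" using u1w Max_ge[OF finite_Us] order_trans by blast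
    have nt: "non_terminal R (Inl u)" unfolding non_terminal_def
    proof (intro exI[of _ "length B - 1"] conjI)
      show "0 < length B - 1" "Suc (length B - 1) < length R" using B by (auto simp: R_def)
      show "R ! (length B - 1) = Inl u" using B by (simp add: R_def nth_append rev_nth)
    qed
    have "back_edge U V R (u1, va)" unfolding back_edge_def
      using minV minU maxU nt uu1 u1U by auto
    thus False using noE[OF fR e1] by blast
  qed
qed

lemma core_Inr:
  assumes G: "PRBG U V E" and fA: "fwd_inc U V E A" and fB: "fwd_inc U V E B"
    and A: "A = Inr v # Inl ua # A'" and B: "B = Inr v # Inl ub # B'"
    and lt: "ua < ub" and last: "last A = last B"
  shows False
proof -
  have pA: "is_path U V E A" and pB: "is_path U V E B" using fA fB by (auto simp: fwd_inc_def)
  have sUA: "sorted_wrt (<) (useq A)" and sVA: "sorted_wrt (<) (vseq A)"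
    and sUB: "sorted_wrt (<) (useq B)" and sVB: "sorted_wrt (<) (vseq B)"
    using fA fB by (auto simp: fwd_inc_def)
  have vA: "\<And>v'. Inr v' \<in> set A \<Longrightarrow> v \<le> v'"
    using sVA A by (auto simp del: set_vseq simp add: set_vseq[symmetric] less_imp_le)
  have vB: "\<And>v'. Inr v' \<in> set B \<Longrightarrow> v \<le> v'"
    using sVB B by (auto simp del: set_vseq simp add: set_vseq[symmetric] less_imp_le)
  have uA: "\<And>u'. Inl u' \<in> set A \<Longrightarrow> ua \<le> u'"
    using sUA A by (auto simp del: set_useq simp add: set_useq[symmetric] less_imp_le)
  have uB: "\<And>u'. Inl u' \<in> set B \<Longrightarrow> ub \<le> u'"
    using sUB B by (auto simp del: set_useq simp add: set_useq[symmetric] less_imp_le)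
  have eB: "(ub, v) \<in> E" using is_path_adj01[OF pB[unfolded B]] by simp
  have eA: "(ua, v) \<in> E" using is_path_adj01[OF pA[unfolded A]] by simp
  have ubU: "ub \<in> U" using is_path_vert[OF pB, of "Inl ub"] B by (simp add: vert_def)
  have uaU: "ua \<in> U" using is_path_vert[OF pA, of "Inl ua"] A by (simp add: vert_def)
  have noE: "\<not> back_edge U V P e" if "forward_path U V E P" "e \<in> E" for P e
    using G that unfolding PRBG_def by blast
  show False
  proof (cases "last A")
    case (Inl uw)
    have "Inl uw \<in> set B" using last Inl B by (metis last_in_set list.distinct(1))
    hence ubw: "ub \<le> uw" using uB by blast
    have A'ne: "A' \<noteq> []"
    proof
      assume "A' = []" hence "uw = ua" using A Inl by simp
      thus False using lt ubw by simp
    qed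
    have minV: "Min (Vs A) = v"
      by (rule Min_eqI[OF finite_Vs]) (auto simp: Vs_def A vA[unfolded A])
    have "Inl uw \<in> set A" using Inl A by (metis last_in_set list.distinct(1))
    hence "uw \<in> Us A" by (simp add: Us_def)
    hence maxU: "ub \<le> Max (Us A)" using ubw Max_ge[OF finite_Us] order_trans by blast
    have "ua \<in> Us A" using A by (simp add: Us_def)
    hence minU: "Min (Us A) \<le> ub" using Min_le[OF finite_Us] lt by (meson less_imp_le order_trans)
    have nt: "non_terminal A (Inl ua)" unfolding non_terminal_def
      using A A'ne by (intro exI[of _ 1]) auto
    have "back_edge U V A (ub, v)" unfolding back_edge_def
      using minU maxU minV nt lt ubU by auto
    moreover have "forward_path U V E A" using fA by (simp add: forward_path_def)
    ultimately show False using noE eB by blast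
  next
    case (Inr vw)
    have A'ne: "A' \<noteq> []" using A Inr by auto
    then obtain a2 A'' where A': "A' = a2 # A''" by (cases A') auto
    have "adj E (Inl ua) a2" using is_path_adj01[of U V E "Inl ua" a2 A''] pA A A'
      by (metis is_path_tl list.distinct(1))
    then obtain v1 where a2: "a2 = Inr v1" and e1: "(ua, v1) \<in> E"
      by (cases a2) auto
    have v1V: "v1 \<in> V" using is_path_vert[OF pA, of "Inr v1"] A A' a2 by (simp add: vert_def)
    have vv1: "v < v1" using sVA A A' a2 by simp
    have "Inr vw \<in> set (Inr v1 # A'')" using Inr A A' a2 by (metis last_ConsR last_in_set list.distinct(1))
    hence v1w: "v1 \<le> vw" using sVA A A' a2
      by (auto simp del: set_vseq simp add: set_vseq[symmetric] less_imp_le)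
    define R where "R = rev B @ [Inl ua]"
    have pR: "is_path U V E R" unfolding R_def
      by (rule is_path_snoc[OF is_path_rev[OF pB]]) (auto simp: vert_def uaU B last_rev eA)
    have "sorted_wrt (>) (vseq R)" using sVB by (simp add: R_def sorted_wrt_rev)
    moreover have "sorted_wrt (>) (useq R)" using sUB uB lt
      by (auto simp: R_def sorted_wrt_rev sorted_wrt_append intro: less_le_trans)
    ultimately have fR: "forward_path U V E R" using pR by (simp add: forward_path_def fwd_dec_def)
    have minU: "Min (Us R) = ua"
      by (rule Min_eqI[OF finite_Us]) (auto simp: Us_def R_def dest: uB intro: less_imp_le less_le_trans[OF lt])
    have "v \<in> Vs R" using B by (simp add: Vs_def R_def)
    hence minV: "Min (Vs R) \<le> v1" using Min_le[OF finite_Vs] vv1 by (meson less_imp_le order_trans)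
    have "Inr vw \<in> set B" using last Inr B by (metis last_in_set list.distinct(1))
    hence "vw \<in> Vs R" by (simp add: Vs_def R_def)
    hence maxV: "v1 \<le> Max (Vs R)" using v1w Max_ge[OF finite_Vs] order_trans by blast
    have nt: "non_terminal R (Inr v)" unfolding non_terminal_def
    proof (intro exI[of _ "length B - 1"] conjI)
      show "0 < length B - 1" "Suc (length B - 1) < length R" using B by (auto simp: R_def)
      show "R ! (length B - 1) = Inr v" using B by (simp add: R_def nth_append rev_nth)
    qed
    have "back_edge U V R (ua, v1)" unfolding back_edge_def
      using minV minU maxV nt vv1 v1V by auto
    thus False using noE[OF fR e1] by blast
  qed
qed

lemma inc_unique:
  assumes G: "PRBG U V E"
  shows "fwd_inc U V E A \<Longrightarrow> fwd_inc U V E B \<Longrightarrow> hd A = hd B \<Longrightarrow> last A = last B \<Longrightarrow> A = B"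
proof (induction A arbitrary: B rule: induct_list012)
  case 1 thus ?case by (simp add: fwd_inc_def is_path_def)
next
  case (2 a)
  have "B \<noteq> []" using 2 by (simp add: fwd_inc_def is_path_def)
  then obtain b B' where B: "B = b # B'" by (cases B) auto
  have "B' = []"
  proof (rule ccontr)
    assume "B' \<noteq> []"
    hence "last B \<in> set B'" using B by simp
    moreover have "last B = b" using 2 B by simp
    moreover have "distinct B" using fwd_inc_distinct 2 by blast
    ultimately show False using B by simp
  qed
  thus ?case using 2 B by simp
next
  case (3 a a' A'')
  have "B \<noteq> []" using 3 by (simp add: fwd_inc_def is_path_def)
  then obtain b B1 where B: "B = b # B1" by (cases B) auto
  have ab: "b = a" using 3 B by simp
  have "B1 \<noteq> []"
  proof
    assume "B1 = []"
    hence "last (a # a' # A'') = a" using 3 B by simp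
    hence "a \<in> set (a' # A'')" by (metis last_ConsR last_in_set list.distinct(1))
    moreover have "distinct (a # a' # A'')" using fwd_inc_distinct 3 by blast
    ultimately show False by simp
  qed
  then obtain b' B'' where B1: "B1 = b' # B''" by (cases B1) auto
  show ?case
  proof (cases "a' = b'")
    case True
    have "a' # A'' = b' # B''"
    proof (rule 3(2))
      show "fwd_inc U V E (a' # A'')" using 3(3) fwd_inc_tl by blast
      show "fwd_inc U V E (b' # B'')" using 3(4) fwd_inc_tl B B1 by blast
      show "hd (a' # A'') = hd (b' # B'')" using True by simp
      show "last (a' # A'') = last (b' # B'')" using 3(6) B B1 by simp
    qed
    thus ?thesis using B B1 ab by simp
  next
    case False
    have pA: "is_path U V E (a # a' # A'')" and pB: "is_path U V E (a # b' # B'')"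
      using 3 B B1 ab by (auto simp: fwd_inc_def)
    have aA: "adj E a a'" and aB: "adj E a b'" using is_path_adj01 pA pB by blast+
    have fA: "fwd_inc U V E (a # a' # A'')" and fB: "fwd_inc U V E (a # b' # B'')"
      and la: "last (a # a' # A'') = last (a # b' # B'')" using 3 B B1 ab by auto
    show ?thesis
    proof (cases a)
      case (Inl u)
      obtain va vb where a': "a' = Inr va" and b': "b' = Inr vb"
        using aA aB Inl by (cases a'; cases b') auto
      have "va \<noteq> vb" using False a' b' by simp
      hence "va < vb \<or> vb < va" by auto
      thus ?thesis
        using core_Inl[OF G fA fB] core_Inl[OF G fB fA] la Inl a' b' by metis
    next
      case (Inr v)
      obtain ua ub where a': "a' = Inl ua" and b': "b' = Inl ub"
        using aA aB Inr by (cases a'; cases b') auto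
      have "ua \<noteq> ub" using False a' b' by simp
      hence "ua < ub \<or> ub < ua" by auto
      thus ?thesis
        using core_Inr[OF G fA fB] core_Inr[OF G fB fA] la Inr a' b' by metis
    qed
  qed
qed


lemma last_take_Suc: "i < length P \<Longrightarrow> last (take (Suc i) P) = P ! i"
proof -
  assume i: "i < length P"
  have "take (Suc i) P \<noteq> []" using i by auto
  hence "last (take (Suc i) P) = take (Suc i) P ! (length (take (Suc i) P) - 1)" by (rule last_conv_nth)
  also have "\<dots> = P ! i" using i by simp
  finally show ?thesis .
qed

theorem lemma4:
  fixes U :: "'u::linorder set" and V :: "'v::linorder set" and E :: "('u \<times> 'v) set"
    and x y :: "'u + 'v" and P Q :: "('u + 'v) list"
  assumes "PRBG U V E"
    and "vert U V x"
    and "(fwd_inc U V E P \<and> fwd_inc U V E Q) \<or> (fwd_dec U V E P \<and> fwd_dec U V E Q)"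
    and "hd P = x" and "hd Q = x"
    and "y \<noteq> x"
    and "i < length P" and "P ! i = y"
    and "j < length Q" and "Q ! j = y"
  shows "take (Suc i) P = take (Suc j) Q"
proof -
  let ?A = "take (Suc i) P" and ?B = "take (Suc j) Q"
  have h: "hd ?A = hd ?B" using assms by (metis hd_take zero_less_Suc)
  have l: "last ?A = last ?B" using assms by (simp add: last_take_Suc)
  have ne: "?A \<noteq> []" "?B \<noteq> []" using assms by auto
  from assms(3) show ?thesis
  proof
    assume "fwd_inc U V E P \<and> fwd_inc U V E Q"
    hence "fwd_inc U V E ?A" "fwd_inc U V E ?B" using fwd_inc_take by blast+
    thus ?thesis using inc_unique[OF assms(1)] h l by blast
  next
    assume d: "fwd_dec U V E P \<and> fwd_dec U V E Q"
    have dA: "fwd_dec U V E ?A" "fwd_dec U V E ?B"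
      using d unfolding fwd_dec_def
      by (metis append_take_drop_id is_path_take sorted_wrt_append useq_simps(4) vseq_simps(4) zero_less_Suc)+
    hence "fwd_inc U V E (rev ?A)" "fwd_inc U V E (rev ?B)" using fwd_dec_rev by blast+
    moreover have "hd (rev ?A) = hd (rev ?B)" "last (rev ?A) = last (rev ?B)"
      using h l ne by (simp_all add: hd_rev last_rev)
    ultimately have "rev ?A = rev ?B" using inc_unique[OF assms(1)] by blast
    thus ?thesis by simp
  qed
qed

end
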